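(* Let $k\ge 2$, $G=\Theta(2,2,2k)$, $m\ge 4$, and let $L$ be an $m$-assignment for $G$. If $wz\in E(G)$ is an edge for which there exist $x\in L(w)-L(z)$ and $y\in L(z)-L(w)$, then there are at least $(m-1)^{2k-1}(m-2)^2$ proper $L$-colorings of $G$ that color $w$ with $x$ and $z$ with $y$.
   Context: $\Theta(l_1,l_2,l_3)$ denotes two end vertices joined by three internally disjoint paths of lengths $l_1,l_2,l_3$. An $m$-assignment $L$ assigns to each vertex a set of $m$ colors; a proper $L$-coloring is a proper coloring $f$ with $f(v)\in L(v)$ for each vertex $v$. *)

theory Defs
  imports "HOL-Library.FuncSet"
begin

text \<open>Concrete labelling of Theta(2,2,2k): end vertices 0 and 1; the two paths of
length 2 are 0-2-1 and 0-3-1; the path of length 2k is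
0 - 4 - 5 - ... - (2k+2) - 1 (internal vertices 4..2k+2, i.e. 2k-1 of them).\<close>

definition theta_verts :: "nat \<Rightarrow> nat set" where
  "theta_verts k = {0..<2*k+3}"

definition theta_long_path :: "nat \<Rightarrow> nat \<Rightarrow> nat" where
  "theta_long_path k i = (if i = 0 then 0 else if i = 2*k then 1 else i + 3)"

definition theta_edges :: "nat \<Rightarrow> nat set set" where
  "theta_edges k = {{0,2},{2,1},{0,3},{3,1}}
     \<union> {{theta_long_path k i, theta_long_path k (Suc i)} | i. i < 2*k}"

definition is_m_assignment :: "nat set \<Rightarrow> nat \<Rightarrow> (nat \<Rightarrow> 'c set) \<Rightarrow> bool" where
  "is_m_assignment V m L \<longleftrightarrow> (\<forall>v\<in>V. finite (L v) \<and> card (L v) = m)"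

definition proper_L_colorings ::
    "nat set \<Rightarrow> nat set set \<Rightarrow> (nat \<Rightarrow> 'c set) \<Rightarrow> (nat \<Rightarrow> 'c) set" where
  "proper_L_colorings V E L =
     {f \<in> V \<rightarrow>\<^sub>E UNIV. (\<forall>v\<in>V. f v \<in> L v) \<and> (\<forall>a b. {a,b} \<in> E \<longrightarrow> f a \<noteq> f b)}"

end

theory Submission imports Defs begin

definition Cs :: "nat set set \<Rightarrow> (nat \<Rightarrow> 'c set) \<Rightarrow> nat \<Rightarrow> nat \<Rightarrow> 'c \<Rightarrow> 'c \<Rightarrow> nat set \<Rightarrow> (nat \<Rightarrow> 'c) set" where
  "Cs E L w z x y U = {f \<in> U \<rightarrow>\<^sub>E UNIV. (\<forall>v\<in>U. f v \<in> L v) \<and> (\<forall>a\<in>U. \<forall>b\<in>U. {a,b} \<in> E \<longrightarrow> f a \<noteq> f b) \<and> f w = x \<and> f z = y}"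

lemma Cs_finite:
  assumes "finite W" "\<forall>u\<in>W. finite (L u)"
  shows "finite (Cs E L w z x y W)"
proof -
  have "Cs E L w z x y W \<subseteq> PiE W L" by (auto simp: Cs_def PiE_def Pi_def)
  moreover have "finite (PiE W L)" using assms by (intro finite_PiE) auto
  ultimately show ?thesis using finite_subset by blast
qed

lemma step_generic:
  assumes fin: "finite U" and finL: "\<forall>u\<in>U. finite (L u)" and fv: "finite (L v)" and cv: "card (L v) = m"
  and vU: "v \<notin> U" and wU: "w \<in> U" and zU: "z \<in> U" and noloop: "\<forall>a. {a,a} \<notin> E"
  and dN: "card {u\<in>U. {v,u}\<in>E} \<le> d"
  shows "card (Cs E L w z x y U) * (m - d) \<le> card (Cs E L w z x y (insert v U))"
proof -
  define N where "N = {u\<in>U. {v,u}\<in>E}"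
  define F where "F g = (\<lambda>c. g(v:=c)) ` (L v - g ` N)" for g :: "nat \<Rightarrow> 'a"
  let ?C = "Cs E L w z x y U"
  let ?C' = "Cs E L w z x y (insert v U)"
  have finN: "finite N" using fin N_def by auto
  have sub: "(\<Union>g\<in>?C. F g) \<subseteq> ?C'"
  proof
    fix f assume "f \<in> (\<Union>g\<in>?C. F g)"
    then obtain g c where g: "g \<in> ?C" and c: "c \<in> L v" "c \<notin> g ` N" and f: "f = g(v:=c)"
      by (auto simp: F_def)
    have vw: "v \<noteq> w" "v \<noteq> z" using vU wU zU by auto
    have pr: "f a \<noteq> f b" if ha: "a \<in> insert v U" and hb: "b \<in> insert v U" and he: "{a,b} \<in> E" for a b
    proof -
      consider "a = v" "b = v" | "a = v" "b \<in> U" "b \<noteq> v" | "b = v" "a \<in> U" "a \<noteq> v" | "a \<in> U" "b \<in> U" "a \<noteq> v" "b \<noteq> v"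
        using ha hb by blast
      then show ?thesis
      proof cases
        case 1 then show ?thesis using noloop he by auto
      next
        case 2 then have "b \<in> N" using he N_def by auto
        then show ?thesis using 2 c f by auto
      next
        case 3 then have "a \<in> N" using he N_def by (auto simp: insert_commute)
        then show ?thesis using 3 c f by auto
      next
        case 4 then show ?thesis using g he f by (auto simp: Cs_def)
      qed
    qed
    have m1: "f \<in> insert v U \<rightarrow>\<^sub>E UNIV" using g f vU by (auto simp: Cs_def PiE_def extensional_def)
    have m2: "\<forall>u\<in>insert v U. f u \<in> L u" using g f c by (auto simp: Cs_def)
    have m3: "f w = x" "f z = y" using g f vw by (auto simp: Cs_def)
    have m4: "\<forall>a\<in>insert v U. \<forall>b\<in>insert v U. {a,b} \<in> E \<longrightarrow> f a \<noteq> f b" using pr by blast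
    show "f \<in> ?C'" unfolding Cs_def using m1 m2 m3 m4 by blast
  qed
  have disj: "F g \<inter> F g' = {}" if "g \<in> ?C" "g' \<in> ?C" "g \<noteq> g'" for g g'
  proof (rule ccontr)
    assume "F g \<inter> F g' \<noteq> {}"
    then obtain c c' where e: "g(v:=c) = g'(v:=c')" by (auto simp: F_def)
    have gv: "g v = undefined" "g' v = undefined" using that vU by (auto simp: Cs_def PiE_def extensional_def)
    have "g u = g' u" for u
    proof (cases "u = v")
      case True then show ?thesis using gv by simp
    next
      case False then show ?thesis using fun_cong[OF e, of u] by simp
    qed
    then have "g = g'" by (rule ext)
    then show False using that by auto
  qed
  have cardF: "m - d \<le> card (F g)" if "g \<in> ?C" for g
  proof -
    have "inj_on (\<lambda>c. g(v:=c)) (L v - g ` N)" by (intro inj_onI) (drule fun_cong[where x=v], simp)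
    then have "card (F g) = card (L v - g ` N)" by (simp add: F_def card_image)
    moreover have "card (L v) - card (g ` N) \<le> card (L v - g ` N)"
      using finN by (intro diff_card_le_card_Diff) auto
    moreover have "card (g ` N) \<le> card N" using finN card_image_le by blast
    moreover have "card N \<le> d" using dN N_def by simp
    ultimately show ?thesis using cv by linarith
  qed
  have finC: "finite ?C" by (rule Cs_finite[OF fin finL])
  have finF: "\<forall>g\<in>?C. finite (F g)" using fv unfolding F_def by blast
  have s1: "card ?C * (m - d) \<le> (\<Sum>g\<in>?C. card (F g))"
    using sum_bounded_below[of ?C "m-d" "\<lambda>g. card (F g)"] cardF by simp
  have disj': "\<forall>g\<in>?C. \<forall>g'\<in>?C. g \<noteq> g' \<longrightarrow> F g \<inter> F g' = {}" using disj by blast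
  have s2: "card (\<Union>g\<in>?C. F g) = (\<Sum>g\<in>?C. card (F g))"
    by (rule card_UN_disjoint[OF finC finF disj'])
  have finC': "finite ?C'" using Cs_finite[of "insert v U" L] fin finL fv by simp
  have s3: "card (\<Union>g\<in>?C. F g) \<le> card ?C'"
    by (rule card_mono[OF finC' sub])
  show ?thesis using s1 s2 s3 by linarith
qed
lemma edges_pairs:
  "{a,b} \<in> theta_edges k \<longleftrightarrow>
    ((a=0\<and>b=2) \<or> (a=2\<and>b=1) \<or> (a=0\<and>b=3) \<or> (a=3\<and>b=1) \<or> (\<exists>i<2*k. a = theta_long_path k i \<and> b = theta_long_path k (Suc i))) \<or>
    ((b=0\<and>a=2) \<or> (b=2\<and>a=1) \<or> (b=0\<and>a=3) \<or> (b=3\<and>a=1) \<or> (\<exists>i<2*k. b = theta_long_path k i \<and> a = theta_long_path k (Suc i)))"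
  unfolding theta_edges_def by (simp add: doubleton_eq_iff) blast

lemma path_pairs:
  assumes "k \<ge> 2"
  shows "(\<exists>i<2*k. a = theta_long_path k i \<and> b = theta_long_path k (Suc i)) \<longleftrightarrow>
     (a = 0 \<and> b = 4) \<or> (a = 2*k+2 \<and> b = 1) \<or> (4 \<le> a \<and> a < 2*k+2 \<and> b = a+1)"
proof
  assume "\<exists>i<2*k. a = theta_long_path k i \<and> b = theta_long_path k (Suc i)"
  then obtain i where i: "i < 2*k" "a = theta_long_path k i" "b = theta_long_path k (Suc i)" by blast
  consider "i = 0" | "i = 2*k - 1" | "0 < i" "i < 2*k - 1" using i by linarith
  then show "(a = 0 \<and> b = 4) \<or> (a = 2*k+2 \<and> b = 1) \<or> (4 \<le> a \<and> a < 2*k+2 \<and> b = a+1)"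
  proof cases
    case 1 then show ?thesis using i assms by (simp add: theta_long_path_def)
  next
    case 2
    have "Suc (2*k-1) = 2*k" "2*k-1 \<noteq> 0" "2*k-1+3 = 2*k+2" using assms by auto
    then show ?thesis using i 2 by (simp add: theta_long_path_def)
  next
    case 3
    have "Suc i \<noteq> 2*k" "i \<noteq> 2*k" using 3 by auto
    then show ?thesis using i 3 by (simp add: theta_long_path_def)
  qed
next
  assume h: "(a = 0 \<and> b = 4) \<or> (a = 2*k+2 \<and> b = 1) \<or> (4 \<le> a \<and> a < 2*k+2 \<and> b = a+1)"
  then consider "a = 0" "b = 4" | "a = 2*k+2" "b = 1" | "4 \<le> a" "a < 2*k+2" "b = a+1" by blast
  then show "\<exists>i<2*k. a = theta_long_path k i \<and> b = theta_long_path k (Suc i)"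
  proof cases
    case 1 then show ?thesis using assms by (intro exI[of _ 0]) (simp add: theta_long_path_def)
  next
    case 2
    have "Suc (2*k-1) = 2*k" "2*k-1 \<noteq> 0" "2*k-1+3 = 2*k+2" "2*k-1 < 2*k" using assms by auto
    then show ?thesis using 2 by (intro exI[of _ "2*k-1"]) (simp add: theta_long_path_def)
  next
    case 3
    have "a - 3 < 2*k" "a - 3 \<noteq> 0" "a - 3 \<noteq> 2*k" "Suc (a-3) \<noteq> 2*k" "a - 3 + 3 = a" "Suc (a-3) + 3 = a + 1"
      using 3 by auto
    then show ?thesis using 3 by (intro exI[of _ "a-3"]) (simp add: theta_long_path_def; arith)
  qed
qed

definition nb :: "nat \<Rightarrow> nat \<Rightarrow> nat set" where
  "nb k v = (if v = 0 then {2,3,4} else if v = 1 then {2,3,2*k+2} else if v = 2 \<or> v = 3 then {0,1}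
     else if 4 \<le> v \<and> v \<le> 2*k+2 then {if v = 4 then 0 else v - 1, if v = 2*k+2 then 1 else v + 1} else {})"

lemma edge_iff:
  assumes "k \<ge> 2"
  shows "{a,b} \<in> theta_edges k \<longleftrightarrow> a < 2*k+3 \<and> b \<in> nb k a"
  unfolding edges_pairs path_pairs[OF assms] path_pairs[OF assms, of b a] nb_def
  using assms by auto


lemma no_loop: assumes "k \<ge> 2" shows "{a,a} \<notin> theta_edges k"
proof -
  have "a \<notin> nb k a" by (simp add: nb_def; arith)
  then show ?thesis using edge_iff[OF assms, of a a] by blast
qed

lemma edge_in_V:
  assumes "k \<ge> 2" "{a,b} \<in> theta_edges k" shows "a < 2*k+3" "b < 2*k+3"
proof -
  show "a < 2*k+3" using assms edge_iff by blast
  have "{b,a} \<in> theta_edges k" using assms(2) by (simp add: insert_commute)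
  then show "b < 2*k+3" using assms(1) edge_iff by blast
qed

lemma tstep:
  assumes k: "k \<ge> 2" and La: "is_m_assignment (theta_verts k) m L"
    and UV: "U \<subseteq> {0..<2*k+3}" and v: "v < 2*k+3" "v \<notin> U" and wz: "w \<in> U" "z \<in> U"
    and D: "U \<inter> nb k v \<subseteq> D" "finite D" "card D \<le> d"
  shows "card (Cs (theta_edges k) L w z x y U) * (m - d) \<le> card (Cs (theta_edges k) L w z x y (insert v U))"
proof (rule step_generic)
  show "finite U" using UV finite_subset by blast
  show "\<forall>u\<in>U. finite (L u)" using UV La by (auto simp: is_m_assignment_def theta_verts_def)
  show "finite (L v)" "card (L v) = m" using v La by (auto simp: is_m_assignment_def theta_verts_def)
  show "v \<notin> U" "w \<in> U" "z \<in> U" by fact+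
  show "\<forall>a. {a,a} \<notin> theta_edges k" using no_loop k by blast
  have "{u\<in>U. {v,u} \<in> theta_edges k} = U \<inter> nb k v" using edge_iff[OF k] v by auto
  then show "card {u\<in>U. {v,u} \<in> theta_edges k} \<le> d" using D card_mono[OF D(2)] by (metis le_trans)
qed


lemma fwd:
  assumes k: "k \<ge> 2" and La: "is_m_assignment (theta_verts k) m L"
    and UV: "U \<subseteq> {0..<2*k+3}" and wz: "w \<in> U" "z \<in> U" and s: "4 \<le> s"
  shows "s + l \<le> 2*k+3 \<Longrightarrow> (\<forall>j. s \<le> j \<and> j < s+l \<longrightarrow> j \<notin> U) \<Longrightarrow>
    (l > 0 \<longrightarrow> (if s+l-1 = 2*k+2 then 1 else s+l) \<notin> U) \<Longrightarrow>
    card (Cs (theta_edges k) L w z x y U) * (m-1)^l \<le> card (Cs (theta_edges k) L w z x y (U \<union> {s..<s+l}))"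
proof (induction l)
  case 0
  then show ?case by simp
next
  case (Suc l)
  let ?C = "\<lambda>U. card (Cs (theta_edges k) L w z x y U)"
  define v where "v = s + l"
  define U' where "U' = U \<union> {s..<s+l}"
  have h1: "s + l \<le> 2*k+3" using Suc.prems by simp
  have h2: "\<forall>j. s \<le> j \<and> j < s+l \<longrightarrow> j \<notin> U" using Suc.prems(2) by simp
  have h3: "l > 0 \<longrightarrow> (if s+l-1 = 2*k+2 then 1 else s+l) \<notin> U"
    using Suc.prems(1,2) by auto
  have IH: "?C U * (m-1)^l \<le> ?C U'" using Suc.IH[OF h1 h2 h3] U'_def by simp
  have sv: "(if v = 2*k+2 then 1 else v+1) \<notin> U" using Suc.prems(3) v_def by (simp split: if_splits)
  have v4: "4 \<le> v" "v \<le> 2*k+2" using s v_def Suc.prems(1) by auto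
  have "U' \<inter> nb k v \<subseteq> {if v = 4 then 0 else v - 1}"
  proof
    fix u assume u: "u \<in> U' \<inter> nb k v"
    then have "u = (if v = 4 then 0 else v - 1) \<or> u = (if v = 2*k+2 then 1 else v+1)"
      using v4 by (auto simp: nb_def split: if_splits)
    moreover have "u \<noteq> (if v = 2*k+2 then 1 else v+1)"
      using u sv s v_def U'_def by (auto split: if_splits)
    ultimately show "u \<in> {if v = 4 then 0 else v - 1}" by blast
  qed
  then have st: "?C U' * (m-1) \<le> ?C (insert v U')"
    using UV v4 h1 wz v_def U'_def Suc.prems(2)
    by (intro tstep[OF k La]) auto
  have ins: "insert v U' = U \<union> {s..<s + Suc l}" using v_def U'_def by auto
  have "?C U * (m-1)^(Suc l) = (?C U * (m-1)^l) * (m-1)" by simp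
  also have "\<dots> \<le> ?C U' * (m-1)" using IH by (rule mult_le_mono1)
  also have "\<dots> \<le> ?C (U \<union> {s..<s + Suc l})" using st ins by simp
  finally show ?case .
qed

lemma bwd:
  assumes k: "k \<ge> 2" and La: "is_m_assignment (theta_verts k) m L"
    and UV: "U \<subseteq> {0..<2*k+3}" and wz: "w \<in> U" "z \<in> U" and e: "e \<le> 2*k+3"
  shows "4 + l \<le> e \<Longrightarrow> (\<forall>j. e - l \<le> j \<and> j < e \<longrightarrow> j \<notin> U) \<Longrightarrow>
    (l > 0 \<longrightarrow> (if e - l = 4 then 0 else e - l - 1) \<notin> U) \<Longrightarrow>
    card (Cs (theta_edges k) L w z x y U) * (m-1)^l \<le> card (Cs (theta_edges k) L w z x y (U \<union> {e-l..<e}))"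
proof (induction l)
  case 0
  then show ?case by simp
next
  case (Suc l)
  let ?C = "\<lambda>U. card (Cs (theta_edges k) L w z x y U)"
  define v where "v = e - Suc l"
  define U' where "U' = U \<union> {e-l..<e}"
  have h1: "4 + l \<le> e" using Suc.prems by simp
  have h2: "\<forall>j. e - l \<le> j \<and> j < e \<longrightarrow> j \<notin> U" 
  proof (intro allI impI)
    fix j assume "e - l \<le> j \<and> j < e"
    then have "e - Suc l \<le> j \<and> j < e" by linarith
    then show "j \<notin> U" using Suc.prems(2) by blast
  qed
  have h3: "l > 0 \<longrightarrow> (if e - l = 4 then 0 else e - l - 1) \<notin> U"
    using Suc.prems(1,2) by auto
  have IH: "?C U * (m-1)^l \<le> ?C U'" using Suc.IH[OF h1 h2 h3] U'_def by simp
  have eqv: "e - Suc l - 1 = e - Suc (Suc l)" by simp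
  have pv: "(if v = 4 then 0 else v - 1) \<notin> U" using Suc.prems(3) v_def eqv by (cases "e - Suc l = 4") auto
  have v4: "4 \<le> v" "v \<le> 2*k+2" using e v_def Suc.prems(1) by auto
  have "U' \<inter> nb k v \<subseteq> {if v = 2*k+2 then 1 else v + 1}"
  proof
    fix u assume u: "u \<in> U' \<inter> nb k v"
    then have "u = (if v = 4 then 0 else v - 1) \<or> u = (if v = 2*k+2 then 1 else v+1)"
      using v4 by (auto simp: nb_def split: if_splits)
    moreover have "u \<noteq> (if v = 4 then 0 else v - 1)"
      using u pv v4 v_def U'_def by (auto split: if_splits)
    ultimately show "u \<in> {if v = 2*k+2 then 1 else v + 1}" by blast
  qed
  then have st: "?C U' * (m-1) \<le> ?C (insert v U')"
    using UV v4 h1 wz v_def U'_def Suc.prems(2) e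
    by (intro tstep[OF k La]) auto
  have ins: "insert v U' = U \<union> {e - Suc l..<e}" using v_def U'_def Suc.prems(1) by auto
  have "?C U * (m-1)^(Suc l) = (?C U * (m-1)^l) * (m-1)" by simp
  also have "\<dots> \<le> ?C U' * (m-1)" using IH by (rule mult_le_mono1)
  also have "\<dots> \<le> ?C (U \<union> {e - Suc l..<e})" using st ins by simp
  finally show ?case .
qed


lemma chain4:
  fixes c0 c1 c2 c3 c4 a1 a2 a3 a4 :: nat
  assumes "1 \<le> c0" "c0*a1 \<le> c1" "c1*a2 \<le> c2" "c2*a3 \<le> c3" "c3*a4 \<le> c4"
  shows "a1*a2*a3*a4 \<le> c4"
proof -
  have "a1 \<le> c1" using assms(1,2) by (metis mult_1 mult_le_mono1 le_trans)
  then have "a1*a2 \<le> c2" using assms(3) by (metis mult_le_mono1 le_trans)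
  then have "a1*a2*a3 \<le> c3" using assms(4) by (metis mult_le_mono1 le_trans)
  then show "a1*a2*a3*a4 \<le> c4" using assms(5) by (metis mult_le_mono1 le_trans)
qed

lemma chain6:
  fixes c0 c1 c2 c3 c4 c5 c6 a1 a2 a3 a4 a5 a6 :: nat
  assumes "1 \<le> c0" "c0*a1 \<le> c1" "c1*a2 \<le> c2" "c2*a3 \<le> c3" "c3*a4 \<le> c4" "c4*a5 \<le> c5" "c5*a6 \<le> c6"
  shows "a1*a2*a3*a4*a5*a6 \<le> c6"
proof -
  have "a1*a2*a3*a4 \<le> c4" using chain4 assms(1-5) by blast
  then have "a1*a2*a3*a4*a5 \<le> c5" using assms(6) by (metis mult_le_mono1 le_trans)
  then show ?thesis using assms(7) by (metis mult_le_mono1 le_trans)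
qed

lemma caseA1:
  assumes k: "k \<ge> 2" and La: "is_m_assignment (theta_verts k) m L"
    and b: "1 \<le> card (Cs (theta_edges k) L w z x y {w,z})" and S: "{w,z} = {0,4}"
  shows "(m-1)^(2*k-1)*(m-2)^2 \<le> card (Cs (theta_edges k) L w z x y {0..<2*k+3})"
proof -
  let ?C = "\<lambda>U. card (Cs (theta_edges k) L w z x y U)"
  have wz: "w \<in> {0,4}" "z \<in> {0,4}" using S by blast+
  have s1: "?C {0,4} * (m-1)^(2*k-2) \<le> ?C ({0,4} \<union> {5..<5+(2*k-2)})"
    using k wz by (intro fwd[OF k La]) auto
  have e1: "{0,4} \<union> {5..<5+(2*k-2)} = {0} \<union> {4..<2*k+3}" using k by auto
  have s2: "?C ({0} \<union> {4..<2*k+3}) * (m-1) \<le> ?C (insert 1 ({0} \<union> {4..<2*k+3}))"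
    using k wz by (intro tstep[OF k La, where D="{2*k+2}"]) (auto simp: nb_def)
  have s3: "?C (insert 1 ({0} \<union> {4..<2*k+3})) * (m-2) \<le> ?C (insert 2 (insert 1 ({0} \<union> {4..<2*k+3})))"
    using k wz by (intro tstep[OF k La, where D="{0,1}"]) (auto simp: nb_def)
  have s4: "?C (insert 2 (insert 1 ({0} \<union> {4..<2*k+3}))) * (m-2) \<le> ?C (insert 3 (insert 2 (insert 1 ({0} \<union> {4..<2*k+3}))))"
    using k wz by (intro tstep[OF k La, where D="{0,1}"]) (auto simp: nb_def)
  have e2: "insert 3 (insert 2 (insert 1 ({0} \<union> {4..<2*k+3}))) = {0..<2*k+3}" using k by auto
  have "(m-1)^(2*k-2) * (m-1) * (m-2) * (m-2) \<le> ?C {0..<2*k+3}"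
    using chain4[OF b[unfolded S] s1[unfolded e1] s2 s3 s4[unfolded e2]] .
  moreover have "(m-1)^(2*k-1)*(m-2)^2 = (m-1)^(2*k-2) * (m-1) * (m-2) * (m-2)"
  proof -
    have "2*k-1 = Suc (2*k-2)" using k by auto
    then show ?thesis by (simp add: power2_eq_square mult_ac)
  qed
  ultimately show ?thesis by simp
qed


lemma caseA2:
  assumes k: "k \<ge> 2" and La: "is_m_assignment (theta_verts k) m L"
    and b: "1 \<le> card (Cs (theta_edges k) L w z x y {w,z})" and S: "{w,z} = {2*k+2,1}"
  shows "(m-1)^(2*k-1)*(m-2)^2 \<le> card (Cs (theta_edges k) L w z x y {0..<2*k+3})"
proof -
  let ?C = "\<lambda>U. card (Cs (theta_edges k) L w z x y U)"
  have wz: "w \<in> {2*k+2,1}" "z \<in> {2*k+2,1}" using S by blast+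
  have s1: "?C {2*k+2,1} * (m-1)^(2*k-2) \<le> ?C ({2*k+2,1} \<union> {2*k+2-(2*k-2)..<2*k+2})"
    using k wz by (intro bwd[OF k La]) auto
  have e1: "{2*k+2,1} \<union> {2*k+2-(2*k-2)..<2*k+2} = {1} \<union> {4..<2*k+3}" using k by auto
  have s2: "?C ({1} \<union> {4..<2*k+3}) * (m-1) \<le> ?C (insert 0 ({1} \<union> {4..<2*k+3}))"
    using k wz by (intro tstep[OF k La, where D="{4}"]) (auto simp: nb_def)
  have s3: "?C (insert 0 ({1} \<union> {4..<2*k+3})) * (m-2) \<le> ?C (insert 2 (insert 0 ({1} \<union> {4..<2*k+3})))"
    using k wz by (intro tstep[OF k La, where D="{0,1}"]) (auto simp: nb_def)
  have s4: "?C (insert 2 (insert 0 ({1} \<union> {4..<2*k+3}))) * (m-2) \<le> ?C (insert 3 (insert 2 (insert 0 ({1} \<union> {4..<2*k+3}))))"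
    using k wz by (intro tstep[OF k La, where D="{0,1}"]) (auto simp: nb_def)
  have e2: "insert 3 (insert 2 (insert 0 ({1} \<union> {4..<2*k+3}))) = {0..<2*k+3}" using k by auto
  have "(m-1)^(2*k-2) * (m-1) * (m-2) * (m-2) \<le> ?C {0..<2*k+3}"
    using chain4[OF b[unfolded S] s1[unfolded e1] s2 s3 s4[unfolded e2]] .
  moreover have "(m-1)^(2*k-1)*(m-2)^2 = (m-1)^(2*k-2) * (m-1) * (m-2) * (m-2)"
  proof -
    have "2*k-1 = Suc (2*k-2)" using k by auto
    then show ?thesis by (simp add: power2_eq_square mult_ac)
  qed
  ultimately show ?thesis by simp
qed

lemma caseA3:
  assumes k: "k \<ge> 2" and La: "is_m_assignment (theta_verts k) m L"
    and b: "1 \<le> card (Cs (theta_edges k) L w z x y {w,z})" and S: "{w,z} = {j,j+1}"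
    and j: "4 \<le> j" "j < 2*k+2"
  shows "(m-1)^(2*k-1)*(m-2)^2 \<le> card (Cs (theta_edges k) L w z x y {0..<2*k+3})"
proof -
  let ?C = "\<lambda>U. card (Cs (theta_edges k) L w z x y U)"
  have wz: "w \<in> {j,j+1}" "z \<in> {j,j+1}" using S by blast+
  have s1: "?C {j,j+1} * (m-1)^(j-4) \<le> ?C ({j,j+1} \<union> {j-(j-4)..<j})"
    using k wz j by (intro bwd[OF k La]) auto
  have e1: "{j,j+1} \<union> {j-(j-4)..<j} = {4..<j+2}" using j by auto
  have s2: "?C {4..<j+2} * (m-1)^(2*k+1-j) \<le> ?C ({4..<j+2} \<union> {j+2..<j+2+(2*k+1-j)})"
    using k wz j by (intro fwd[OF k La]) auto
  have e2: "{4..<j+2} \<union> {j+2..<j+2+(2*k+1-j)} = {4..<2*k+3}" using j by auto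
  have s3: "?C {4..<2*k+3} * (m-1) \<le> ?C (insert 0 {4..<2*k+3})"
    using k wz j by (intro tstep[OF k La, where D="{4}"]) (auto simp: nb_def)
  have s4: "?C (insert 0 {4..<2*k+3}) * (m-1) \<le> ?C (insert 1 (insert 0 {4..<2*k+3}))"
    using k wz j by (intro tstep[OF k La, where D="{2*k+2}"]) (auto simp: nb_def)
  have s5: "?C (insert 1 (insert 0 {4..<2*k+3})) * (m-2) \<le> ?C (insert 2 (insert 1 (insert 0 {4..<2*k+3})))"
    using k wz j by (intro tstep[OF k La, where D="{0,1}"]) (auto simp: nb_def)
  have s6: "?C (insert 2 (insert 1 (insert 0 {4..<2*k+3}))) * (m-2) \<le> ?C (insert 3 (insert 2 (insert 1 (insert 0 {4..<2*k+3}))))"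
    using k wz j by (intro tstep[OF k La, where D="{0,1}"]) (auto simp: nb_def)
  have e3: "insert 3 (insert 2 (insert 1 (insert 0 {4..<2*k+3}))) = {0..<2*k+3}" using k by auto
  have "(m-1)^(j-4) * (m-1)^(2*k+1-j) * (m-1) * (m-1) * (m-2) * (m-2) \<le> ?C {0..<2*k+3}"
    using chain6[OF b[unfolded S] s1[unfolded e1] s2[unfolded e2] s3 s4 s5 s6[unfolded e3]] .
  moreover have "(m-1)^(2*k-1)*(m-2)^2 = (m-1)^(j-4) * (m-1)^(2*k+1-j) * (m-1) * (m-1) * (m-2) * (m-2)"
  proof -
    have "2*k-1 = (j-4) + (2*k+1-j) + 1 + 1" using k j by auto
    then have "(m-1)^(2*k-1) = (m-1)^(j-4) * (m-1)^(2*k+1-j) * (m-1) * (m-1)"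
      by (simp only: power_add power_one_right)
    then show ?thesis by (simp add: power2_eq_square)
  qed
  ultimately show ?thesis by simp
qed

lemma caseB:
  assumes k: "k \<ge> 2" and La: "is_m_assignment (theta_verts k) m L"
    and b: "1 \<le> card (Cs (theta_edges k) L w z x y {w,z})" and S: "{w,z} = {a,c}"
    and a: "a \<in> {0,1}" and c: "c \<in> {2,3}"
  shows "(m-1)^(2*k-1)*(m-2)^2 \<le> card (Cs (theta_edges k) L w z x y {0..<2*k+3})"
proof -
  let ?C = "\<lambda>U. card (Cs (theta_edges k) L w z x y U)"
  have wz: "w \<in> {a,c}" "z \<in> {a,c}" using S by blast+
  have s1: "?C {a,c} * (m-1) \<le> ?C (insert (1-a) {a,c})"
    using k wz a c by (intro tstep[OF k La, where D="{c}"]) (auto simp: nb_def)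
  have e1: "insert (1-a) {a,c} = {0,1,c}" using a by auto
  have s2: "?C {0,1,c} * (m-2) \<le> ?C (insert (5-c) {0,1,c})"
    using k wz a c by (intro tstep[OF k La, where D="{0,1}"]) (auto simp: nb_def)
  have e2: "insert (5-c) {0,1,c} = {0,1,2,3}" using c by auto
  have s3: "?C {0,1,2,3} * (m-1)^(2*k-2) \<le> ?C ({0,1,2,3} \<union> {4..<4+(2*k-2)})"
    using k wz a c by (intro fwd[OF k La]) auto
  have e3: "{0,1,2,3} \<union> {4..<4+(2*k-2)} = {0..<2*k+2}" using k by auto
  have s4: "?C {0..<2*k+2} * (m-2) \<le> ?C (insert (2*k+2) {0..<2*k+2})"
    using k wz a c by (intro tstep[OF k La, where D="{2*k+1,1}"]) (auto simp: nb_def)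
  have e4: "insert (2*k+2) {0..<2*k+2} = {0..<2*k+3}" by auto
  have "(m-1) * (m-2) * (m-1)^(2*k-2) * (m-2) \<le> ?C {0..<2*k+3}"
    using chain4[OF b[unfolded S] s1[unfolded e1] s2[unfolded e2] s3[unfolded e3] s4[unfolded e4]] .
  moreover have "(m-1)^(2*k-1)*(m-2)^2 = (m-1) * (m-2) * (m-1)^(2*k-2) * (m-2)"
  proof -
    have "2*k-1 = Suc (2*k-2)" using k by auto
    then show ?thesis by (simp add: power2_eq_square mult_ac)
  qed
  ultimately show ?thesis by simp
qed


lemma base:
  assumes k: "k \<ge> 2" and La: "is_m_assignment (theta_verts k) m L"
    and E: "{w,z} \<in> theta_edges k" and xy: "x \<in> L w" "y \<in> L z" "x \<noteq> y"
  shows "1 \<le> card (Cs (theta_edges k) L w z x y {w,z})"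
proof -
  define g where "g = (\<lambda>v. if v = w then x else if v = z then y else undefined)"
  have wz: "w \<noteq> z" using E no_loop[OF k] by auto
  have "g \<in> Cs (theta_edges k) L w z x y {w,z}"
  proof -
    have "g \<in> {w,z} \<rightarrow>\<^sub>E UNIV" by (auto simp: g_def PiE_def extensional_def)
    moreover have "\<forall>v\<in>{w,z}. g v \<in> L v" using xy wz by (auto simp: g_def)
    moreover have "\<forall>a\<in>{w,z}. \<forall>b\<in>{w,z}. {a,b} \<in> theta_edges k \<longrightarrow> g a \<noteq> g b"
      using no_loop[OF k] xy wz by (auto simp: g_def)
    moreover have "g w = x" "g z = y" using wz by (auto simp: g_def)
    ultimately show ?thesis unfolding Cs_def by blast
  qed
  moreover have "finite (Cs (theta_edges k) L w z x y {w,z})"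
  proof (rule Cs_finite)
    have "w < 2*k+3" "z < 2*k+3" using edge_in_V[OF k E] by auto
    then show "\<forall>u\<in>{w,z}. finite (L u)" using La by (auto simp: is_m_assignment_def theta_verts_def)
  qed simp
  ultimately show ?thesis by (metis One_nat_def Suc_leI card_gt_0_iff empty_iff)
qed

lemma final_eq:
  assumes k: "k \<ge> 2"
  shows "Cs (theta_edges k) L w z x y {0..<2*k+3} =
    {f \<in> proper_L_colorings (theta_verts k) (theta_edges k) L. f w = x \<and> f z = y}"
  using edge_in_V[OF k]
  unfolding Cs_def proper_L_colorings_def theta_verts_def by auto

lemma edge_cases:
  assumes k: "k \<ge> 2" and E: "{w,z} \<in> theta_edges k"
  shows "(w \<in> {0,1} \<and> z \<in> {2,3}) \<or> (z \<in> {0,1} \<and> w \<in> {2,3}) \<or> (w = 0 \<and> z = 4) \<or> (w = 4 \<and> z = 0)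
    \<or> (w = 2*k+2 \<and> z = 1) \<or> (w = 1 \<and> z = 2*k+2)
    \<or> (\<exists>j. 4 \<le> j \<and> j < 2*k+2 \<and> ((w = j \<and> z = j+1) \<or> (z = j \<and> w = j+1)))"
  using E unfolding edges_pairs path_pairs[OF k] path_pairs[OF k, of z w]
  by auto


theorem lemma23:
  fixes k m :: nat and L :: "nat \<Rightarrow> 'c set" and w z :: nat and x y :: 'c
  assumes "k \<ge> 2" and "m \<ge> 4"
    and "is_m_assignment (theta_verts k) m L"
    and "{w, z} \<in> theta_edges k"
    and "x \<in> L w - L z" and "y \<in> L z - L w"
  shows "card {f \<in> proper_L_colorings (theta_verts k) (theta_edges k) L. f w = x \<and> f z = y}
           \<ge> (m - 1) ^ (2*k - 1) * (m - 2) ^ 2"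
proof -
  have xy: "x \<in> L w" "y \<in> L z" "x \<noteq> y" using assms(5,6) by auto
  have b: "1 \<le> card (Cs (theta_edges k) L w z x y {w,z})" using base[OF assms(1,3,4) xy] .
  note A1 = caseA1[OF assms(1,3) b]
  note A2 = caseA2[OF assms(1,3) b]
  note A3 = caseA3[OF assms(1,3) b]
  note B = caseB[OF assms(1,3) b]
  have "(m-1)^(2*k-1)*(m-2)^2 \<le> card (Cs (theta_edges k) L w z x y {0..<2*k+3})"
    using edge_cases[OF assms(1,4)]
  proof (elim disjE exE conjE)
    assume "w \<in> {0,1}" "z \<in> {2,3}" then show ?thesis using B[of w z] by blast
  next
    assume "z \<in> {0,1}" "w \<in> {2,3}" then show ?thesis using B[of z w] by (simp add: insert_commute)
  next
    assume "w = 0" "z = 4" then show ?thesis using A1 by simp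
  next
    assume "w = 4" "z = 0" then show ?thesis using A1 by (simp add: insert_commute)
  next
    assume "w = 2*k+2" "z = 1" then show ?thesis using A2 by simp
  next
    assume "w = 1" "z = 2*k+2" then show ?thesis using A2 by (simp add: insert_commute)
  next
    fix j assume "4 \<le> j" "j < 2*k+2" "w = j" "z = j+1" then show ?thesis using A3[of j] by simp
  next
    fix j assume "4 \<le> j" "j < 2*k+2" "z = j" "w = j+1" then show ?thesis using A3[of j] by (simp add: insert_commute)
  qed
  then show ?thesis using final_eq[OF assms(1), of L w z x y] by simp
qed

end
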